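(* Let $p\in(0,1)$, $m\ge1$, and let $\tilde G^p_m$ be as defined in the context. For every integer $k\ge0$ such that the event has positive probability, conditional on $s(\tilde G^p_m)=k$, the graph $\tilde G^p_m$ is uniformly distributed on the set of connected graphs on $[m]$ with $m+k-1$ edges; in particular this conditional law does not depend on $p$.
   Context: Ordered depth-first search ${\bf oDFS}(G)$ for a connected graph $G$ on $[m]$: set $\mathcal O_0=(1)$, $\mathcal A_0=\emptyset$; for $i=0,\dots,m-1$ let $v_i$ be the first element of $\mathcal O_i$, $\mathcal N_i$ the neighbours of $v_i$ outside $\mathcal A_i\cup\mathcal O_i$, $\mathcal A_{i+1}=\mathcal A_i\cup\{v_i\}$, and $\mathcal O_{i+1}$ obtained by deleting $v_i$ from the front of $\mathcal O_i$ and placing $\mathcal N_i$ in increasing order at the front. Depth-first walk $X(i)=|\mathcal O_i|-1$; area of a tree $T$: $a(T)=\sum_{i=1}^{m-1}X(i)$; an edge $uv\notin E(T)$ is permitted by ${\bf oDFS}(T)$ if $u,v\in\mathcal O_i$ for some $i$. $\tilde T^p_m$ is a random tree on $[m]$ with $\mathbb P(\tilde T^p_m=T)\propto(1-p)^{-a(T)}$; $\tilde G^p_m$ is obtained from $\tilde T^p_m$ by adding each permitted edge independently with probability $p$. The surplus of a connected graph $G$ on $[m]$ is $s(G)=|E(G)|-(m-1)$. *)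

theory Defs
  imports "HOL-Probability.Probability"
begin

definition graph_on :: "nat \<Rightarrow> nat set set \<Rightarrow> bool" where
  "graph_on m E \<longleftrightarrow> (\<forall>e\<in>E. \<exists>u v. e = {u, v} \<and> u \<noteq> v \<and> u \<in> {1..m} \<and> v \<in> {1..m})"

definition adj :: "nat set set \<Rightarrow> nat \<Rightarrow> nat \<Rightarrow> bool" where
  "adj E u v \<longleftrightarrow> {u, v} \<in> E \<and> u \<noteq> v"

definition connected_graph :: "nat \<Rightarrow> nat set set \<Rightarrow> bool" where
  "connected_graph m E \<longleftrightarrow> graph_on m E \<and> (\<forall>u\<in>{1..m}. \<forall>v\<in>{1..m}. (adj E)\<^sup>*\<^sup>* u v)"

definition is_tree :: "nat \<Rightarrow> nat set set \<Rightarrow> bool" where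
  "is_tree m E \<longleftrightarrow> connected_graph m E \<and> card E = m - 1"

definition surplus :: "nat \<Rightarrow> nat set set \<Rightarrow> int" where
  "surplus m E = int (card E) - (int m - 1)"

text \<open>Ordered depth-first search.  A state is the pair (O_i, A_i) where O_i is the
  ordered list of open vertices and A_i the set of explored vertices.\<close>

definition odfs_step :: "nat set set \<Rightarrow> nat list \<times> nat set \<Rightarrow> nat list \<times> nat set" where
  "odfs_step E st = (let Op = fst st; A = snd st; v = hd Op;
      N = {u. adj E v u} - (A \<union> set Op)
    in (sorted_list_of_set N @ tl Op, insert v A))"

definition odfs_state :: "nat set set \<Rightarrow> nat \<Rightarrow> nat list \<times> nat set" where
  "odfs_state E i = (odfs_step E ^^ i) ([1], {})"

definition odfs_open :: "nat set set \<Rightarrow> nat \<Rightarrow> nat list" where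
  "odfs_open E i = fst (odfs_state E i)"

definition dfwalk :: "nat set set \<Rightarrow> nat \<Rightarrow> int" where
  "dfwalk E i = int (length (odfs_open E i)) - 1"

definition area :: "nat \<Rightarrow> nat set set \<Rightarrow> int" where
  "area m T = (\<Sum>i=1..m-1. dfwalk T i)"

definition permitted :: "nat \<Rightarrow> nat set set \<Rightarrow> nat set set" where
  "permitted m T = {{u, v} | u v. u \<noteq> v \<and> {u, v} \<notin> T \<and>
      (\<exists>i<m. u \<in> set (odfs_open T i) \<and> v \<in> set (odfs_open T i))}"

definition tree_weight :: "real \<Rightarrow> nat \<Rightarrow> nat set set \<Rightarrow> real" where
  "tree_weight p m T = (1 - p) powr (- real_of_int (area m T))"

definition tree_pmf :: "real \<Rightarrow> nat \<Rightarrow> nat set set pmf" where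
  "tree_pmf p m = embed_pmf (\<lambda>T. if is_tree m T
      then tree_weight p m T / (\<Sum>T'\<in>{T'. is_tree m T'}. tree_weight p m T') else 0)"

definition graph_pmf :: "real \<Rightarrow> nat \<Rightarrow> nat set set pmf" where
  "graph_pmf p m = do {
      T \<leftarrow> tree_pmf p m;
      f \<leftarrow> Pi_pmf (permitted m T) False (\<lambda>_. bernoulli_pmf p);
      return_pmf (T \<union> {e \<in> permitted m T. f e})
    }"

end

theory Submission
  imports Defs
begin

definition Ac :: "nat set set \<Rightarrow> nat \<Rightarrow> nat set" where "Ac E i = snd (odfs_state E i)"
definition vx :: "nat set set \<Rightarrow> nat \<Rightarrow> nat" where "vx E i = hd (odfs_open E i)"
definition Nb :: "nat set set \<Rightarrow> nat \<Rightarrow> nat set" where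
  "Nb E i = {u. adj E (vx E i) u} - (Ac E i \<union> set (odfs_open E i))"
definition Ted :: "nat set set \<Rightarrow> nat \<Rightarrow> nat set set" where
  "Ted E i = {{vx E j, u} | j u. j < i \<and> u \<in> Nb E j}"

lemma state_Suc: "odfs_state E (Suc i) = odfs_step E (odfs_state E i)"
  by (simp add: odfs_state_def)

lemma open_Suc: "odfs_open E (Suc i) = sorted_list_of_set (Nb E i) @ tl (odfs_open E i)"
  by (simp add: state_Suc odfs_open_def odfs_step_def Let_def Nb_def vx_def Ac_def)

lemma Ac_Suc: "Ac E (Suc i) = insert (vx E i) (Ac E i)"
  by (simp add: state_Suc odfs_open_def odfs_step_def Let_def Nb_def vx_def Ac_def)

lemma open_0: "odfs_open E 0 = [1]" and Ac_0: "Ac E 0 = {}"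
  by (simp_all add: odfs_open_def Ac_def odfs_state_def)

lemma Ted_0: "Ted E 0 = {}" by (simp add: Ted_def)

lemma Ted_Suc: "Ted E (Suc i) = Ted E i \<union> (\<lambda>u. {vx E i, u}) ` Nb E i"
  unfolding Ted_def by (auto simp: less_Suc_eq)

lemma adj_sym: "adj E u v = adj E v u"
  by (auto simp: adj_def insert_commute)

lemma adj_range: "graph_on m E \<Longrightarrow> adj E u v \<Longrightarrow> u \<in> {1..m} \<and> v \<in> {1..m}"
  unfolding graph_on_def adj_def
  by (metis doubleton_eq_iff)

lemma graph_on_fin: "graph_on m E \<Longrightarrow> E \<subseteq> Pow {1..m}"
  unfolding graph_on_def by auto

lemma Nb_fin: "graph_on m E \<Longrightarrow> Nb E i \<subseteq> {1..m}"
  unfolding Nb_def using adj_range by blast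

definition inv :: "nat \<Rightarrow> nat set set \<Rightarrow> nat \<Rightarrow> bool" where
  "inv m E i \<longleftrightarrow> distinct (odfs_open E i) \<and> set (odfs_open E i) \<inter> Ac E i = {}
    \<and> Ac E i = vx E ` {..<i} \<and> card (Ac E i) = i
    \<and> set (odfs_open E i) \<union> Ac E i \<subseteq> {1..m}
    \<and> 1 \<in> set (odfs_open E i) \<union> Ac E i
    \<and> (\<forall>v\<in>Ac E i. \<forall>u. adj E v u \<longrightarrow> u \<in> Ac E i \<union> set (odfs_open E i))
    \<and> card (Ted E i) + 1 = card (Ac E i \<union> set (odfs_open E i))
    \<and> (\<forall>e\<in>Ted E i. e \<subseteq> Ac E i \<union> set (odfs_open E i))
    \<and> (\<forall>x\<in>Ac E i \<union> set (odfs_open E i). (adj (Ted E i))\<^sup>*\<^sup>* 1 x)"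

lemma closed_reach:
  assumes "(adj E)\<^sup>*\<^sup>* a b" "a \<in> R" "\<forall>v\<in>R. \<forall>u. adj E v u \<longrightarrow> u \<in> R"
  shows "b \<in> R"
  using assms by (induction rule: rtranclp_induct) auto

lemma inv_0: "1 \<le> m \<Longrightarrow> inv m E 0"
  by (simp add: inv_def open_0 Ac_0 Ted_0)

lemma inv_nonempty:
  assumes "connected_graph m E" "inv m E i" "i < m"
  shows "odfs_open E i \<noteq> []"
proof
  assume e: "odfs_open E i = []"
  have "{1..m} \<subseteq> Ac E i"
  proof
    fix u assume "u \<in> {1..m}"
    hence "(adj E)\<^sup>*\<^sup>* 1 u" using assms(1,3) unfolding connected_graph_def by auto
    thus "u \<in> Ac E i" apply (rule closed_reach)
      using assms(2) e unfolding inv_def by auto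
  qed
  hence "m \<le> card (Ac E i)"
    using assms(2) unfolding inv_def
    by (metis card_atLeastAtMost card_mono diff_Suc_1 finite_imageI finite_lessThan)
  thus False using assms(2,3) unfolding inv_def by auto
qed

lemma inv_Suc:
  assumes cg: "connected_graph m E" and I: "inv m E i" and im: "i < m"
  shows "inv m E (Suc i)"
proof -
  let ?O = "odfs_open E i" let ?A = "Ac E i" let ?v = "vx E i" let ?N = "Nb E i"
  have ne: "?O \<noteq> []" using inv_nonempty[OF cg I im] .
  have go: "graph_on m E" using cg unfolding connected_graph_def by auto
  have Nm: "?N \<subseteq> {1..m}" using Nb_fin[OF go] .
  hence fN: "finite ?N" using finite_subset by blast
  have vO: "?v \<in> set ?O" using ne by (simp add: vx_def)
  have Oeq: "?O = ?v # tl ?O" using ne by (simp add: vx_def)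
  have dO: "distinct ?O" and dis: "set ?O \<inter> ?A = {}" and Aim: "?A = vx E ` {..<i}"
    and cA: "card ?A = i" and sub: "set ?O \<union> ?A \<subseteq> {1..m}" and one: "1 \<in> set ?O \<union> ?A"
    and cl: "\<forall>v\<in>?A. \<forall>u. adj E v u \<longrightarrow> u \<in> ?A \<union> set ?O"
    and cT: "card (Ted E i) + 1 = card (?A \<union> set ?O)"
    and eT: "\<forall>e\<in>Ted E i. e \<subseteq> ?A \<union> set ?O"
    and rT: "\<forall>x\<in>?A \<union> set ?O. (adj (Ted E i))\<^sup>*\<^sup>* 1 x"
    using I unfolding inv_def by (blast+)
  have NAO: "?N \<inter> (?A \<union> set ?O) = {}" unfolding Nb_def by auto
  have O': "odfs_open E (Suc i) = sorted_list_of_set ?N @ tl ?O" by (rule open_Suc)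
  have A': "Ac E (Suc i) = insert ?v ?A" by (rule Ac_Suc)
  have vA: "?v \<notin> ?A" using vO dis by auto
  have tlO: "set (tl ?O) = set ?O - {?v}" using dO Oeq
    by (metis Diff_insert_absorb distinct.simps(2) list.simps(15))
  have U: "Ac E (Suc i) \<union> set (odfs_open E (Suc i)) = ?A \<union> set ?O \<union> ?N"
    using O' A' tlO fN vO by auto
  have finAO: "finite (?A \<union> set ?O)" using sub finite_subset by auto
  have T': "Ted E (Suc i) = Ted E i \<union> (\<lambda>u. {?v, u}) ` ?N" by (rule Ted_Suc)
  have finT: "finite (Ted E i)"
  proof -
    have "Ted E i \<subseteq> Pow (?A \<union> set ?O)" using eT by auto
    thus ?thesis using finAO by (meson finite_Pow_iff finite_subset)
  qed
  have disT: "Ted E i \<inter> (\<lambda>u. {?v, u}) ` ?N = {}" using eT NAO by fastforce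
  have injN: "inj_on (\<lambda>u. {?v, u}) ?N"
    by (rule inj_onI) (metis NAO vO disjoint_iff doubleton_eq_iff UnI2)
  have c1: "card (Ted E (Suc i)) = card (Ted E i) + card ?N"
    unfolding T' using finT fN disT card_Un_disjoint card_image injN by (metis finite_imageI)
  have c2: "card (?A \<union> set ?O \<union> ?N) = card (?A \<union> set ?O) + card ?N"
    using card_Un_disjoint finAO fN NAO by (metis Int_commute)
  show ?thesis unfolding inv_def
  proof (intro conjI)
    show "distinct (odfs_open E (Suc i))" using O' dO NAO fN tlO
      by (auto simp: distinct_tl)
    show "set (odfs_open E (Suc i)) \<inter> Ac E (Suc i) = {}"
      using O' A' NAO fN tlO dis vO by auto
    show "Ac E (Suc i) = vx E ` {..<Suc i}" using A' Aim by (auto simp: lessThan_Suc)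
    show "card (Ac E (Suc i)) = Suc i" using A' cA vA finAO
      by (metis card_insert_disjoint finite_Un)
    show "set (odfs_open E (Suc i)) \<union> Ac E (Suc i) \<subseteq> {1..m}" using U sub Nm by auto
    show "1 \<in> set (odfs_open E (Suc i)) \<union> Ac E (Suc i)" using U one by auto
    show "\<forall>v\<in>Ac E (Suc i). \<forall>u. adj E v u \<longrightarrow> u \<in> Ac E (Suc i) \<union> set (odfs_open E (Suc i))"
      using U A' cl unfolding Nb_def by auto
    show "card (Ted E (Suc i)) + 1 = card (Ac E (Suc i) \<union> set (odfs_open E (Suc i)))"
      using U c1 c2 cT by simp
    show "\<forall>e\<in>Ted E (Suc i). e \<subseteq> Ac E (Suc i) \<union> set (odfs_open E (Suc i))"
      using U T' eT vO by auto
    have mono: "(adj (Ted E i))\<^sup>*\<^sup>* \<le> (adj (Ted E (Suc i)))\<^sup>*\<^sup>*"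
      by (rule rtranclp_mono) (auto simp: adj_def T')
    show "\<forall>x\<in>Ac E (Suc i) \<union> set (odfs_open E (Suc i)). (adj (Ted E (Suc i)))\<^sup>*\<^sup>* 1 x"
    proof
      fix x assume "x \<in> Ac E (Suc i) \<union> set (odfs_open E (Suc i))"
      hence "x \<in> ?A \<union> set ?O \<or> x \<in> ?N" using U by auto
      thus "(adj (Ted E (Suc i)))\<^sup>*\<^sup>* 1 x"
      proof
        assume "x \<in> ?A \<union> set ?O" thus ?thesis using rT mono by blast
      next
        assume xN: "x \<in> ?N"
        have "(adj (Ted E (Suc i)))\<^sup>*\<^sup>* 1 ?v" using rT mono vO by blast
        moreover have "adj (Ted E (Suc i)) ?v x" unfolding adj_def T'
          using xN NAO vO by auto
        ultimately show ?thesis by (rule rtranclp.rtrancl_into_rtrancl)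
      qed
    qed
  qed
qed

lemma inv_all: "connected_graph m E \<Longrightarrow> 1 \<le> m \<Longrightarrow> i \<le> m \<Longrightarrow> inv m E i"
  by (induction i) (auto intro: inv_0 inv_Suc)

context
  fixes m E assumes cg: "connected_graph m E" and m1: "1 \<le> m"
begin

lemma I: "i \<le> m \<Longrightarrow> inv m E i" using inv_all[OF cg m1] .

lemma ne: "i < m \<Longrightarrow> odfs_open E i \<noteq> []" using inv_nonempty[OF cg I] by simp

lemma vx_in: "i < m \<Longrightarrow> vx E i \<in> set (odfs_open E i)" using ne by (simp add: vx_def)

lemma Ac_img: "i \<le> m \<Longrightarrow> Ac E i = vx E ` {..<i}" using I unfolding inv_def by blast

lemma disj: "i \<le> m \<Longrightarrow> set (odfs_open E i) \<inter> Ac E i = {}" using I unfolding inv_def by blast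

lemma dist: "i \<le> m \<Longrightarrow> distinct (odfs_open E i)" using I unfolding inv_def by blast

lemma Orange: "i \<le> m \<Longrightarrow> set (odfs_open E i) \<subseteq> {1..m}" using I unfolding inv_def by blast

lemma vx_notin: "i < m \<Longrightarrow> vx E i \<notin> Ac E i"
  using vx_in[of i] disj[of i] by auto

lemma vx_inA: "j < i \<Longrightarrow> i \<le> m \<Longrightarrow> vx E j \<in> Ac E i" using Ac_img by auto

lemma vx_inj: "i < m \<Longrightarrow> j < m \<Longrightarrow> vx E i = vx E j \<Longrightarrow> i = j"
  by (metis linorder_neqE_nat vx_inA vx_notin less_imp_le)

lemma AO_step: "i < m \<Longrightarrow> Ac E i \<union> set (odfs_open E i) \<subseteq> Ac E (Suc i) \<union> set (odfs_open E (Suc i))"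
proof -
  assume im: "i < m"
  have "set (odfs_open E i) = insert (vx E i) (set (tl (odfs_open E i)))"
    using ne[OF im] by (cases "odfs_open E i") (auto simp: vx_def)
  thus ?thesis by (auto simp: open_Suc Ac_Suc)
qed

lemma AO_mono: "i \<le> j \<Longrightarrow> j \<le> m \<Longrightarrow> Ac E i \<union> set (odfs_open E i) \<subseteq> Ac E j \<union> set (odfs_open E j)"
proof (induction j rule: dec_induct)
  case base thus ?case by simp
next
  case (step n) thus ?case using AO_step[of n] by auto
qed

lemma Ac_m: "Ac E m = {1..m}"
proof -
  have "Ac E m \<subseteq> {1..m}" "card (Ac E m) = m" using I[of m] unfolding inv_def by auto
  thus ?thesis by (simp add: card_subset_eq)
qed

lemma vx_surj: "x \<in> {1..m} \<Longrightarrow> \<exists>i<m. x = vx E i"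
  using Ac_m Ac_img[of m] by auto

lemma Ted_sub: "Ted E i \<subseteq> E"
  unfolding Ted_def Nb_def adj_def by auto

lemma Ted_tree: "is_tree m (Ted E m)"
proof -
  have go: "graph_on m E" using cg unfolding connected_graph_def by auto
  have O_m: "set (odfs_open E m) = {}" using disj[OF order_refl] Orange[OF order_refl] Ac_m by (metis Int_absorb2)
  have c: "card (Ted E m) + 1 = m" using I[of m] O_m Ac_m unfolding inv_def by auto
  have r: "\<forall>x\<in>{1..m}. (adj (Ted E m))\<^sup>*\<^sup>* 1 x" using I[of m] O_m Ac_m unfolding inv_def by auto
  have g: "graph_on m (Ted E m)"
    unfolding graph_on_def
  proof
    fix e assume "e \<in> Ted E m"
    then obtain j u where e: "e = {vx E j, u}" "u \<in> Nb E j" unfolding Ted_def by auto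
    hence "adj E (vx E j) u" unfolding Nb_def by auto
    thus "\<exists>u v. e = {u, v} \<and> u \<noteq> v \<and> u \<in> {1..m} \<and> v \<in> {1..m}"
      using e adj_range[OF go] unfolding adj_def by blast
  qed
  have sy: "symp (adj (Ted E m))" by (auto simp: symp_def adj_sym)
  have "\<forall>u\<in>{1..m}. \<forall>v\<in>{1..m}. (adj (Ted E m))\<^sup>*\<^sup>* u v"
  proof (intro ballI)
    fix u v assume "u \<in> {1..m}" "v \<in> {1..m}"
    hence "(adj (Ted E m))\<^sup>*\<^sup>* u 1" "(adj (Ted E m))\<^sup>*\<^sup>* 1 v"
      using r symp_rtranclp[OF sy] by (auto dest: sympD)
    thus "(adj (Ted E m))\<^sup>*\<^sup>* u v" by auto
  qed
  thus ?thesis using g c unfolding is_tree_def connected_graph_def by auto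
qed

end


lemma perm_key:
  assumes "connected_graph m E" "1 \<le> m" "i < m" "j < m"
    "vx E i \<in> set (odfs_open E j)" "u \<in> set (odfs_open E j)"
  shows "u \<in> Ac E i \<union> set (odfs_open E i)"
proof (cases "j \<le> i")
  case True thus ?thesis using AO_mono[OF assms(1,2) True] assms by auto
next
  case False
  hence "vx E i \<in> Ac E j" using vx_inA[OF assms(1,2)] assms by auto
  thus ?thesis using disj[OF assms(1,2), of j] assms(4,5) by auto
qed

lemma state_eq: "odfs_state E i = (odfs_open E i, Ac E i)"
  by (simp add: odfs_open_def Ac_def)

lemma sim:
  assumes "\<And>i. i < m \<Longrightarrow> odfs_state F i = odfs_state E i \<Longrightarrow> Nb F i = Nb E i"
  shows "i \<le> m \<Longrightarrow> odfs_state F i = odfs_state E i"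
proof (induction i)
  case 0 thus ?case by (simp add: odfs_state_def)
next
  case (Suc i)
  hence eq: "odfs_state F i = odfs_state E i" by simp
  hence "odfs_open F i = odfs_open E i" "Ac F i = Ac E i" "vx F i = vx E i"
    by (simp_all add: odfs_open_def Ac_def vx_def)
  moreover have "Nb F i = Nb E i" using assms[of i] Suc.prems eq by linarith
  ultimately show ?case by (simp add: state_eq open_Suc Ac_Suc)
qed

lemma sim_eqs:
  assumes "odfs_state F i = odfs_state E i"
  shows "odfs_open F i = odfs_open E i" "Ac F i = Ac E i" "vx F i = vx E i"
  using assms by (simp_all add: odfs_open_def Ac_def vx_def)

lemma Ted_eq:
  assumes "\<And>j. j < i \<Longrightarrow> vx F j = vx E j \<and> Nb F j = Nb E j"
  shows "Ted F i = Ted E i"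
proof (intro set_eqI iffI)
  fix x assume "x \<in> Ted F i"
  then obtain j u where x: "x = {vx F j, u}" "j < i" "u \<in> Nb F j" unfolding Ted_def by blast
  have "x = {vx E j, u}" "u \<in> Nb E j" using assms[OF x(2)] x by auto
  thus "x \<in> Ted E i" using x(2) unfolding Ted_def by blast
next
  fix x assume "x \<in> Ted E i"
  then obtain j u where x: "x = {vx E j, u}" "j < i" "u \<in> Nb E j" unfolding Ted_def by blast
  have "x = {vx F j, u}" "u \<in> Nb F j" using assms[OF x(2)] x by auto
  thus "x \<in> Ted F i" using x(2) unfolding Ted_def by blast
qed

lemma permittedE:
  assumes "e \<in> permitted m T"
  obtains u v j where "e = {u,v}" "u \<noteq> v" "e \<notin> T" "j < m"
    "u \<in> set (odfs_open T j)" "v \<in> set (odfs_open T j)"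
  using assms unfolding permitted_def by (smt (verit) mem_Collect_eq)

lemma permittedI:
  assumes "e = {u,v}" "u \<noteq> v" "e \<notin> T" "j < m"
    "u \<in> set (odfs_open T j)" "v \<in> set (odfs_open T j)"
  shows "e \<in> permitted m T"
  using assms unfolding permitted_def by blast

lemma tree_conn: "is_tree m T \<Longrightarrow> connected_graph m T" by (simp add: is_tree_def)

lemma Nb_union:
  assumes T: "is_tree m T" and S: "S \<subseteq> permitted m T" and m1: "1 \<le> m" and im: "i < m"
    and eq: "odfs_state (T \<union> S) i = odfs_state T i"
  shows "Nb (T \<union> S) i = Nb T i"
proof -
  have cg: "connected_graph m T" using T by (simp add: is_tree_def)
  note e = sim_eqs[OF eq]
  have key: "u \<in> Ac T i \<union> set (odfs_open T i)" if "{vx T i, u} \<in> S" for u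
  proof -
    from that S have "{vx T i, u} \<in> permitted m T" by (rule subsetD[rotated])
    then obtain a b j where ab: "{vx T i, u} = {a, b}" "j < m"
      "a \<in> set (odfs_open T j)" "b \<in> set (odfs_open T j)"
      by (rule permittedE)
    have "vx T i \<in> {a,b}" "u \<in> {a,b}" by (metis ab(1) insertI1 insert_commute)+
    hence "vx T i \<in> set (odfs_open T j)" "u \<in> set (odfs_open T j)" using ab(3,4) by auto
    thus ?thesis using perm_key[OF cg m1 im ab(2)] by blast
  qed
  have "adj (T \<union> S) (vx T i) u \<longleftrightarrow> adj T (vx T i) u \<or> ({vx T i, u} \<in> S \<and> vx T i \<noteq> u)" for u
    by (auto simp: adj_def)
  thus ?thesis unfolding Nb_def e using key by blast
qed

lemma tree_fin: "is_tree m T \<Longrightarrow> finite T"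
proof -
  assume "is_tree m T"
  hence "T \<subseteq> Pow {1..m}" using graph_on_fin unfolding is_tree_def connected_graph_def by blast
  thus ?thesis using finite_subset by blast
qed

lemma Ted_self: "is_tree m T \<Longrightarrow> 1 \<le> m \<Longrightarrow> Ted T m = T"
proof -
  assume T: "is_tree m T" and m1: "1 \<le> m"
  have c: "connected_graph m T" using T by (simp add: is_tree_def)
  have "Ted T m \<subseteq> T" by (rule Ted_sub[OF c m1])
  moreover have "card (Ted T m) = card T" using Ted_tree[OF c m1] T by (simp add: is_tree_def)
  ultimately show ?thesis using card_subset_eq tree_fin[OF T] by blast
qed

lemma unique:
  assumes T: "is_tree m T" and m1: "1 \<le> m" and TG: "T \<subseteq> G" and GT: "G - T \<subseteq> permitted m T"
  shows "connected_graph m G \<and> Ted G m = T"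
proof -
  have cg: "connected_graph m T" using T by (simp add: is_tree_def)
  have GU: "T \<union> (G - T) = G" using TG by auto
  have NbE: "Nb G i = Nb T i" if "i < m" "odfs_state G i = odfs_state T i" for i
    using Nb_union[OF T GT m1 that(1)] that(2) unfolding GU by blast
  have st: "odfs_state G i = odfs_state T i" if "i \<le> m" for i
    using sim[OF NbE that] by blast
  have "Ted G m = Ted T m"
  proof (rule Ted_eq)
    fix j assume j: "j < m"
    have "odfs_state G j = odfs_state T j" using st j by simp
    thus "vx G j = vx T j \<and> Nb G j = Nb T j"
      using sim_eqs(3) NbE j by blast
  qed
  hence t: "Ted G m = T" using Ted_self[OF T m1] by simp
  have go: "graph_on m G" unfolding graph_on_def
  proof
    fix e assume e: "e \<in> G"
    show "\<exists>u v. e = {u, v} \<and> u \<noteq> v \<and> u \<in> {1..m} \<and> v \<in> {1..m}"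
    proof (cases "e \<in> T")
      case True thus ?thesis using cg unfolding connected_graph_def graph_on_def by auto
    next
      case False
      with e GT have "e \<in> permitted m T" by blast
      then obtain u v j where "e = {u,v}" "u \<noteq> v" "j < m"
        "u \<in> set (odfs_open T j)" "v \<in> set (odfs_open T j)"
        by (rule permittedE)
      moreover have "u \<in> {1..m}" "v \<in> {1..m}" using Orange[OF cg m1, of j] calculation by auto
      ultimately show ?thesis by blast
    qed
  qed
  have "(adj T)\<^sup>*\<^sup>* \<le> (adj G)\<^sup>*\<^sup>*" by (rule rtranclp_mono) (use TG in \<open>auto simp: adj_def\<close>)
  hence "connected_graph m G" using cg go unfolding connected_graph_def by blast
  thus ?thesis using t by simp
qed


lemma dist_tl: "distinct xs \<Longrightarrow> xs \<noteq> [] \<Longrightarrow> hd xs \<notin> set (tl xs)"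
  by (cases xs) auto

lemma tl_in: "x \<in> set (tl xs) \<Longrightarrow> x \<in> set xs"
  by (cases xs) auto

lemma in_tl: "x \<in> set xs \<Longrightarrow> x \<noteq> hd xs \<Longrightarrow> x \<in> set (tl xs)"
  by (cases xs) auto

lemma NbT:
  assumes cg: "connected_graph m G" and m1: "1 \<le> m" and im: "i < m"
    and eq: "odfs_state (Ted G m) i = odfs_state G i"
  shows "Nb (Ted G m) i = Nb G i"
proof -
  note e = sim_eqs[OF eq]
  let ?v = "vx G i" let ?X = "Ac G i \<union> set (odfs_open G i)"
  have vO: "?v \<in> set (odfs_open G i)" using vx_in[OF cg m1 im] .
  have "u \<in> Nb (Ted G m) i \<longleftrightarrow> u \<in> Nb G i" for u
  proof
    assume "u \<in> Nb (Ted G m) i"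
    hence a: "{?v, u} \<in> Ted G m" "?v \<noteq> u" "u \<notin> ?X" unfolding Nb_def e adj_def by auto
    then obtain j w where jw: "{?v, u} = {vx G j, w}" "j < m" "w \<in> Nb G j" unfolding Ted_def by blast
    from jw(1) have "(?v = vx G j \<and> u = w) \<or> (?v = w \<and> u = vx G j)" by (simp add: doubleton_eq_iff)
    thus "u \<in> Nb G i"
    proof
      assume "?v = vx G j \<and> u = w"
      thus ?thesis using vx_inj[OF cg m1 im jw(2)] jw(3) by auto
    next
      assume c: "?v = w \<and> u = vx G j"
      hence w: "?v \<notin> Ac G j \<union> set (odfs_open G j)" using jw(3) unfolding Nb_def by auto
      show ?thesis
      proof (cases "j < i")
        case True thus ?thesis using vx_inA[OF cg m1 True] im c a(3) by auto
      next
        case False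
        hence "?X \<subseteq> Ac G j \<union> set (odfs_open G j)" using AO_mono[OF cg m1] jw(2) by auto
        thus ?thesis using vO w by auto
      qed
    qed
  next
    assume u: "u \<in> Nb G i"
    hence "{?v, u} \<in> Ted G m" unfolding Ted_def using im by blast
    moreover have "?v \<noteq> u" "u \<notin> ?X" using u vO unfolding Nb_def by auto
    ultimately show "u \<in> Nb (Ted G m) i" unfolding Nb_def e adj_def by auto
  qed
  thus ?thesis by blast
qed

lemma decomp:
  assumes cg: "connected_graph m G" and m1: "1 \<le> m"
  shows "is_tree m (Ted G m) \<and> Ted G m \<subseteq> G \<and> G - Ted G m \<subseteq> permitted m (Ted G m)"
proof -
  let ?T = "Ted G m"
  have st: "odfs_state ?T i = odfs_state G i" if "i \<le> m" for i
    using sim[OF NbT[OF cg m1] that] by blast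
  have key: "{vx G i, vx G j} \<in> permitted m ?T"
    if ij: "i < j" "j < m" and eG: "{vx G i, vx G j} \<in> G" and eT: "{vx G i, vx G j} \<notin> ?T" for i j
  proof -
    have im: "i < m" using ij by simp
    have ne: "vx G i \<noteq> vx G j" using vx_inj[OF cg m1 im ij(2)] ij by auto
    hence "adj G (vx G i) (vx G j)" using eG by (simp add: adj_def)
    hence "vx G j \<in> Nb G i \<or> vx G j \<in> Ac G i \<union> set (odfs_open G i)" unfolding Nb_def by auto
    moreover have "vx G j \<notin> Nb G i" using eT im unfolding Ted_def by blast
    moreover have "vx G j \<notin> Ac G i"
    proof
      assume "vx G j \<in> Ac G i"
      then obtain l where "l < i" "vx G j = vx G l" using Ac_img[OF cg m1, of i] im by auto
      thus False using vx_inj[OF cg m1, of j l] ij by auto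
    qed
    ultimately have vj: "vx G j \<in> set (odfs_open ?T i)" using sim_eqs(1)[OF st[of i]] im by auto
    have vi: "vx G i \<in> set (odfs_open ?T i)" using sim_eqs(1)[OF st[of i]] im vx_in[OF cg m1 im] by auto
    show ?thesis by (rule permittedI[OF refl ne eT im vi vj])
  qed
  have "G - ?T \<subseteq> permitted m ?T"
  proof
    fix e assume e: "e \<in> G - ?T"
    have go: "graph_on m G" using cg unfolding connected_graph_def by auto
    then obtain a b where ab: "e = {a,b}" "a \<noteq> b" "a \<in> {1..m}" "b \<in> {1..m}"
      using e unfolding graph_on_def by blast
    obtain i where i: "i < m" "a = vx G i" using vx_surj[OF cg m1] ab(3) by blast
    obtain j where j: "j < m" "b = vx G j" using vx_surj[OF cg m1] ab(4) by blast
    have eG: "e \<in> G" "e \<notin> ?T" using e by auto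
    have "i \<noteq> j" using i j ab by auto
    hence "i < j \<or> j < i" by arith
    thus "e \<in> permitted m ?T"
    proof
      assume "i < j" thus ?thesis using key[of i j] j eG ab i by simp
    next
      assume "j < i" thus ?thesis using key[of j i] i eG ab j by (simp add: insert_commute)
    qed
  qed
  thus ?thesis using Ted_tree[OF cg m1] Ted_sub[OF cg m1] by blast
qed


lemma perm_card:
  assumes T: "is_tree m T" and m1: "1 \<le> m"
  shows "finite (permitted m T) \<and> int (card (permitted m T)) = area m T"
proof -
  have cg: "connected_graph m T" using T by (simp add: is_tree_def)
  have TT: "Ted T m = T" using Ted_self[OF T m1] .
  let ?O = "odfs_open T"
  define Sg where "Sg = Sigma {..<m} (\<lambda>i. set (tl (?O i)))"
  define h where "h = (\<lambda>(i::nat, w::nat). {vx T i, w})"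
  have vhd: "vx T i = hd (?O i)" for i by (simp add: vx_def)
  have notT: "{vx T i, w} \<notin> T" if i: "i < m" and w: "w \<in> set (?O i)" for i w
  proof
    assume "{vx T i, w} \<in> T"
    hence "{vx T i, w} \<in> Ted T m" using TT by simp
    then obtain j u where jw: "{vx T i, w} = {vx T j, u}" "j < m" "u \<in> Nb T j" unfolding Ted_def by blast
    from jw(1) have "(vx T i = vx T j \<and> w = u) \<or> (vx T i = u \<and> w = vx T j)" by (simp add: doubleton_eq_iff)
    thus False
    proof
      assume "vx T i = vx T j \<and> w = u"
      hence "i = j" "w = u" using vx_inj[OF cg m1 i jw(2)] by auto
      thus False using jw(3) w unfolding Nb_def by auto
    next
      assume c: "vx T i = u \<and> w = vx T j"
      have wA: "w \<notin> Ac T i" using w disj[OF cg m1, of i] i by auto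
      hence "\<not> j < i" using c vx_inA[OF cg m1, of j i] i by auto
      hence "Ac T i \<union> set (?O i) \<subseteq> Ac T j \<union> set (?O j)" using AO_mono[OF cg m1, of i j] jw(2) by auto
      moreover have "vx T i \<in> set (?O i)" using vx_in[OF cg m1 i] .
      moreover have "u \<notin> Ac T j \<union> set (?O j)" using jw(3) unfolding Nb_def by auto
      ultimately show False using c by auto
    qed
  qed
  have surj_lt: "{vx T a, vx T b} \<in> h ` Sg"
    if ab: "a < b" "b < m" and j: "j < m" "vx T a \<in> set (?O j)" "vx T b \<in> set (?O j)" for a b j
  proof -
    have am: "a < m" using ab by simp
    have "\<not> a < j" using vx_inA[OF cg m1, of a j] j disj[OF cg m1, of j] by auto
    hence "set (?O j) \<subseteq> Ac T a \<union> set (?O a)" using AO_mono[OF cg m1, of j a] am by auto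
    moreover have "vx T b \<notin> Ac T a"
    proof
      assume "vx T b \<in> Ac T a"
      then obtain l where "l < a" "vx T b = vx T l" using Ac_img[OF cg m1, of a] am by auto
      thus False using vx_inj[OF cg m1, of b l] ab by auto
    qed
    ultimately have "vx T b \<in> set (?O a)" using j by auto
    moreover have "vx T b \<noteq> hd (?O a)" using vx_inj[OF cg m1 am ab(2)] ab vhd[of a] by auto
    ultimately have "vx T b \<in> set (tl (?O a))" by (rule in_tl)
    hence "(a, vx T b) \<in> Sg" unfolding Sg_def using am by auto
    thus ?thesis unfolding h_def by force
  qed
  have bij: "bij_betw h Sg (permitted m T)"
    unfolding bij_betw_def
  proof (intro conjI)
    show "inj_on h Sg"
    proof (rule inj_onI)
      fix x y assume x: "x \<in> Sg" and y: "y \<in> Sg" and hxy: "h x = h y"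
      obtain i w where xi: "x = (i, w)" "i < m" "w \<in> set (tl (?O i))" using x unfolding Sg_def by auto
      obtain j w' where yj: "y = (j, w')" "j < m" "w' \<in> set (tl (?O j))" using y unfolding Sg_def by auto
      have wi: "w \<in> set (?O i)" "w' \<in> set (?O j)" using xi(3) yj(3) by (auto dest: tl_in)
      from hxy xi yj have "{vx T i, w} = {vx T j, w'}" unfolding h_def by simp
      hence "(vx T i = vx T j \<and> w = w') \<or> (vx T i = w' \<and> w = vx T j)" by (simp add: doubleton_eq_iff)
      thus "x = y"
      proof
        assume "vx T i = vx T j \<and> w = w'"
        thus ?thesis using vx_inj[OF cg m1 xi(2) yj(2)] xi yj by auto
      next
        assume c: "vx T i = w' \<and> w = vx T j"
        have "\<not> j < i" using c wi vx_inA[OF cg m1, of j i] disj[OF cg m1, of i] xi by auto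
        moreover have "\<not> i < j" using c wi vx_inA[OF cg m1, of i j] disj[OF cg m1, of j] yj by auto
        ultimately have "i = j" by simp
        moreover have "vx T j \<notin> set (tl (?O j))"
          using dist_tl[OF dist[OF cg m1] ne[OF cg m1]] yj vhd by auto
        ultimately show ?thesis using c yj by auto
      qed
    qed
    show "h ` Sg = permitted m T"
    proof (intro equalityI subsetI)
      fix e assume "e \<in> h ` Sg"
      then obtain i w where e: "e = {vx T i, w}" "i < m" "w \<in> set (tl (?O i))"
        unfolding Sg_def h_def by auto
      have wi: "w \<in> set (?O i)" using e(3) by (auto dest: tl_in)
      have ne': "vx T i \<noteq> w" using dist_tl[OF dist[OF cg m1] ne[OF cg m1]] e vhd by auto
      show "e \<in> permitted m T"
        by (rule permittedI[OF e(1) ne' _ e(2) vx_in[OF cg m1 e(2)] wi]) (use notT e wi in auto)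
    next
      fix e assume "e \<in> permitted m T"
      then obtain u v j where e: "e = {u,v}" "u \<noteq> v" "j < m"
        "u \<in> set (?O j)" "v \<in> set (?O j)" by (rule permittedE)
      have "u \<in> {1..m}" "v \<in> {1..m}" using Orange[OF cg m1, of j] e by auto
      then obtain a b where a: "a < m" "u = vx T a" and b: "b < m" "v = vx T b"
        using vx_surj[OF cg m1] by metis
      have "a \<noteq> b" using a b e by auto
      hence "a < b \<or> b < a" by arith
      thus "e \<in> h ` Sg"
      proof
        assume "a < b" thus ?thesis using surj_lt[of a b j] a b e by simp
      next
        assume "b < a" thus ?thesis using surj_lt[of b a j] a b e by (simp add: insert_commute)
      qed
    qed
  qed
  have finS: "finite Sg" unfolding Sg_def by auto
  have cS: "card Sg = (\<Sum>i<m. length (tl (?O i)))"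
    unfolding Sg_def
  proof (subst card_SigmaI)
    show "(\<Sum>a\<in>{..<m}. card (set (tl (?O a)))) = (\<Sum>i<m. length (tl (?O i)))"
    proof (rule sum.cong[OF refl])
      fix x assume "x \<in> {..<m}"
      hence "distinct (tl (?O x))" using dist[OF cg m1, of x] by (simp add: distinct_tl)
      thus "card (set (tl (?O x))) = length (tl (?O x))" by (rule distinct_card)
    qed
  qed auto
  have fin: "finite (permitted m T)" using bij finS bij_betw_finite by blast
  have cP: "card (permitted m T) = (\<Sum>i<m. length (tl (?O i)))"
    using bij_betw_same_card[OF bij] cS by simp
  have U: "{..<m} = insert 0 {1..m-1}" using m1 by auto
  have "int (\<Sum>i<m. length (tl (?O i))) = (\<Sum>i<m. int (length (tl (?O i))))" by simp
  also have "\<dots> = (\<Sum>i=1..m-1. int (length (tl (?O i))))"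
    unfolding U by (simp add: open_0)
  also have "\<dots> = area m T"
    unfolding area_def dfwalk_def
  proof (rule sum.cong[OF refl])
    fix i assume "i \<in> {1..m-1}"
    hence "i < m" using m1 by auto
    thus "int (length (tl (?O i))) = int (length (?O i)) - 1"
      using ne[OF cg m1] by (cases "?O i") auto
  qed
  finally show ?thesis using fin cP by simp
qed


lemma tree_exists: "1 \<le> m \<Longrightarrow> \<exists>T. is_tree m T"
proof -
  assume m1: "1 \<le> m"
  define K where "K = {{u,v} | u v. u \<noteq> v \<and> u \<in> {1..m} \<and> v \<in> {1..m}}"
  have go: "graph_on m K" unfolding K_def graph_on_def by blast
  have "(adj K)\<^sup>*\<^sup>* u v" if "u \<in> {1..m}" "v \<in> {1..m}" for u v
  proof (cases "u = v")
    case False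
    hence "adj K u v" using that unfolding adj_def K_def by blast
    thus ?thesis by auto
  qed auto
  hence "connected_graph m K" using go unfolding connected_graph_def by blast
  thus ?thesis using Ted_tree[OF _ m1] by blast
qed

lemma graphs_fin: "finite {G. graph_on m G \<and> Q G}"
proof -
  have "{G. graph_on m G \<and> Q G} \<subseteq> Pow (Pow {1..m})" using graph_on_fin by blast
  thus ?thesis using finite_subset by blast
qed

lemma trees_fin: "finite {T. is_tree m T}"
  using graphs_fin[of m "\<lambda>T. connected_graph m T \<and> card T = m - 1"]
  unfolding is_tree_def connected_graph_def by (simp add: conj_ac)

definition Zn :: "real \<Rightarrow> nat \<Rightarrow> real" where
  "Zn p m = (\<Sum>T'\<in>{T'. is_tree m T'}. tree_weight p m T')"

lemma Zn_pos: "0 < p \<Longrightarrow> p < 1 \<Longrightarrow> 1 \<le> m \<Longrightarrow> 0 < Zn p m"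
proof -
  assume p: "0 < p" "p < 1" and m1: "1 \<le> m"
  obtain T where T: "is_tree m T" using tree_exists[OF m1] by blast
  have pos: "0 < tree_weight p m T'" for T' using p by (simp add: tree_weight_def)
  show ?thesis unfolding Zn_def
    by (rule sum_pos) (use trees_fin T pos in auto)
qed

lemma pmf_tree:
  assumes p: "0 < p" "p < 1" and m1: "1 \<le> m"
  shows "pmf (tree_pmf p m) T = (if is_tree m T then tree_weight p m T / Zn p m else 0)"
proof -
  let ?f = "\<lambda>T. if is_tree m T then tree_weight p m T / Zn p m else 0"
  have Z: "0 < Zn p m" using Zn_pos[OF p m1] .
  have nn: "0 \<le> ?f T" for T using Z p by (simp add: tree_weight_def)
  have "(\<integral>\<^sup>+x. ennreal (?f x) \<partial>count_space UNIV) = (\<Sum>x\<in>{T. is_tree m T}. ennreal (?f x))"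
    by (rule nn_integral_count_space') (use trees_fin in auto)
  also have "\<dots> = ennreal (\<Sum>x\<in>{T. is_tree m T}. ?f x)" by (rule sum_ennreal) (rule nn)
  also have "(\<Sum>x\<in>{T. is_tree m T}. ?f x) = (\<Sum>x\<in>{T. is_tree m T}. tree_weight p m x / Zn p m)"
    by (rule sum.cong) auto
  also have "\<dots> = 1" using Z unfolding Zn_def by (simp add: sum_divide_distrib[symmetric])
  finally have i: "(\<integral>\<^sup>+x. ennreal (?f x) \<partial>count_space UNIV) = 1" by simp
  show ?thesis unfolding tree_pmf_def Zn_def[symmetric] using pmf_embed_pmf[OF nn i] by simp
qed


lemma pmf_inner:
  fixes p :: real
  assumes p: "0 < p" "p < 1" and fP: "finite P" and PT: "P \<inter> T = {}"
  shows "pmf (bind_pmf (Pi_pmf P False (\<lambda>_. bernoulli_pmf p)) (\<lambda>f. return_pmf (T \<union> {e \<in> P. f e}))) G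
       = (if T \<subseteq> G \<and> G - T \<subseteq> P then p ^ card (G - T) * (1 - p) ^ (card P - card (G - T)) else 0)"
proof -
  let ?M = "Pi_pmf P False (\<lambda>_. bernoulli_pmf p)"
  let ?g = "\<lambda>f. T \<union> {e \<in> P. f e}"
  define f0 where "f0 = (\<lambda>e. e \<in> P \<and> e \<in> G)"
  have "pmf (bind_pmf ?M (\<lambda>f. return_pmf (?g f))) G = (\<integral>f. indicator {G} (?g f) \<partial>measure_pmf ?M)"
    by (simp add: pmf_bind)
  also have "\<dots> = (\<Sum>a\<in>{f0}. pmf ?M a *\<^sub>R indicator {G} (?g a))"
  proof (rule integral_measure_pmf)
    fix f assume f: "f \<in> set_pmf ?M" "(indicator {G} (?g f) :: real) \<noteq> 0"
    have out: "\<forall>x. x \<notin> P \<longrightarrow> f x = False" using set_Pi_pmf_subset[OF fP, of False "\<lambda>_. bernoulli_pmf p"] f(1) by blast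
    have gG: "?g f = G" using f(2) by (auto split: split_indicator_asm)
    have "f e = f0 e" for e
    proof (cases "e \<in> P")
      case True
      thus ?thesis using gG PT unfolding f0_def by blast
    next
      case False thus ?thesis using out unfolding f0_def by auto
    qed
    thus "f \<in> {f0}" by auto
  qed simp
  also have "\<dots> = pmf ?M f0 * indicator {G} (?g f0)" by (simp only: sum.insert_remove finite.emptyI sum.empty) simp
  also have "pmf ?M f0 = (\<Prod>e\<in>P. pmf (bernoulli_pmf p) (f0 e))"
    by (rule pmf_Pi') (use fP in \<open>auto simp: f0_def\<close>)
  also have "\<dots> = (\<Prod>e\<in>P. if e \<in> G then p else 1 - p)"
    by (rule prod.cong) (use p in \<open>auto simp: f0_def\<close>)
  also have "\<dots> = p ^ card (P \<inter> G) * (1 - p) ^ card (P - G)"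
    using fP by (simp add: prod.If_cases Int_def set_diff_eq)
  finally have E: "pmf (bind_pmf ?M (\<lambda>f. return_pmf (?g f))) G =
      p ^ card (P \<inter> G) * (1 - p) ^ card (P - G) * indicator {G} (?g f0)" .
  have g0: "?g f0 = T \<union> (P \<inter> G)" unfolding f0_def by auto
  show ?thesis
  proof (cases "T \<subseteq> G \<and> G - T \<subseteq> P")
    case True
    hence PG: "P \<inter> G = G - T" using PT by auto
    have "card (P - G) = card P - card (P \<inter> G)"
      using fP by (metis Diff_Int card_Diff_subset_Int finite_Int inf_commute Int_commute)
    moreover have "?g f0 = G" using g0 PG True by auto
    ultimately show ?thesis using E True PG by simp
  next
    case False
    hence "?g f0 \<noteq> G" using g0 PT by auto
    hence i0: "indicator {G} (?g f0) = (0::real)" by simp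
    show ?thesis by (subst if_not_P[OF False]) (simp only: E i0 mult_zero_right)
  qed
qed


lemma perm_disj: "permitted m T \<inter> T = {}"
  by (auto elim: permittedE)

lemma weight_calc:
  fixes p :: real
  assumes p: "0 < p" "p < 1" and k: "k \<le> a"
  shows "(1 - p) powr (- real a) * (p ^ k * (1 - p) ^ (a - k)) = (p / (1 - p)) ^ k"
proof -
  have q: "0 < 1 - p" using p by simp
  have "(1 - p) ^ (a - k) = (1 - p) powr real (a - k)" using q by (simp add: powr_realpow)
  hence "(1 - p) powr (- real a) * (1 - p) ^ (a - k) = (1 - p) powr (- real a + real (a - k))"
    by (simp only: powr_add)
  also have "- real a + real (a - k) = - real k" using k by simp
  also have "(1 - p) powr (- real k) = 1 / (1 - p) ^ k" using q by (simp add: powr_minus powr_realpow divide_inverse)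
  finally have "(1 - p) powr (- real a) * (1 - p) ^ (a - k) = 1 / (1 - p) ^ k" .
  hence "(1 - p) powr (- real a) * (p ^ k * (1 - p) ^ (a - k)) = p ^ k * (1 / (1 - p) ^ k)"
    by (metis mult.left_commute)
  also have "\<dots> = (p / (1 - p)) ^ k" by (simp add: power_divide)
  finally show ?thesis .
qed

lemma pmf_graph:
  assumes p: "0 < p" "p < 1" and m1: "1 \<le> m"
  shows "pmf (graph_pmf p m) G = (if connected_graph m G then (p / (1 - p)) ^ (card G - (m - 1)) / Zn p m else 0)"
proof -
  let ?inner = "\<lambda>T. bind_pmf (Pi_pmf (permitted m T) False (\<lambda>_. bernoulli_pmf p))
                   (\<lambda>f. return_pmf (T \<union> {e \<in> permitted m T. f e}))"
  let ?Tr = "{T. is_tree m T}"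
  let ?h = "\<lambda>T. pmf (tree_pmf p m) T * pmf (?inner T) G"
  have "pmf (graph_pmf p m) G = (\<integral>T. pmf (?inner T) G \<partial>measure_pmf (tree_pmf p m))"
    unfolding graph_pmf_def by (simp add: pmf_bind)
  also have "\<dots> = (\<Sum>T\<in>?Tr. pmf (tree_pmf p m) T *\<^sub>R pmf (?inner T) G)"
  proof (rule integral_measure_pmf[OF trees_fin])
    fix T assume "T \<in> set_pmf (tree_pmf p m)"
    hence "pmf (tree_pmf p m) T \<noteq> 0" by (simp add: set_pmf_iff)
    thus "T \<in> ?Tr" using pmf_tree[OF p m1, of T] by (auto split: if_splits)
  qed
  also have "\<dots> = (\<Sum>T\<in>?Tr. ?h T)" by simp
  finally have S: "pmf (graph_pmf p m) G = (\<Sum>T\<in>?Tr. ?h T)" .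
  have hT: "?h T = (if T \<subseteq> G \<and> G - T \<subseteq> permitted m T then
         tree_weight p m T / Zn p m * (p ^ card (G - T) * (1 - p) ^ (card (permitted m T) - card (G - T))) else 0)"
    if T: "is_tree m T" for T
    using pmf_tree[OF p m1, of T] pmf_inner[OF p conjunct1[OF perm_card[OF T m1]] perm_disj, of G] T by simp
  show ?thesis
  proof (cases "connected_graph m G")
    case False
    have "?h T = 0" if "T \<in> ?Tr" for T
      using hT[of T] that unique[of m T G] m1 False by auto
    hence "(\<Sum>T\<in>?Tr. ?h T) = 0" by (intro sum.neutral) blast
    thus ?thesis using S False by simp
  next
    case True
    let ?T0 = "Ted G m"
    have d: "is_tree m ?T0" "?T0 \<subseteq> G" "G - ?T0 \<subseteq> permitted m ?T0" using decomp[OF True m1] by auto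
    have z: "?h T = 0" if "T \<in> ?Tr - {?T0}" for T
      using hT[of T] that unique[of m T G] m1 by auto
    have "(\<Sum>T\<in>?Tr. ?h T) = ?h ?T0 + (\<Sum>T\<in>?Tr - {?T0}. ?h T)"
      using d(1) trees_fin by (simp add: sum.remove)
    also have "(\<Sum>T\<in>?Tr - {?T0}. ?h T) = 0" using z by (intro sum.neutral) blast
    finally have S2: "pmf (graph_pmf p m) G = ?h ?T0" using S by simp
    have pc: "finite (permitted m ?T0)" "int (card (permitted m ?T0)) = area m ?T0"
      using perm_card[OF d(1) m1] by auto
    have fT: "finite ?T0" using tree_fin[OF d(1)] .
    have kc: "card (G - ?T0) = card G - (m - 1)"
      using card_Diff_subset[OF fT d(2)] d(1) by (simp add: is_tree_def)
    have kle: "card (G - ?T0) \<le> card (permitted m ?T0)" using card_mono[OF pc(1) d(3)] .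
    have tw: "tree_weight p m ?T0 = (1 - p) powr (- real (card (permitted m ?T0)))"
      unfolding tree_weight_def using pc(2) by (metis of_int_of_nat_eq)
    have "?h ?T0 = tree_weight p m ?T0 / Zn p m * (p ^ card (G - ?T0) * (1 - p) ^ (card (permitted m ?T0) - card (G - ?T0)))"
      using hT[OF d(1)] d by simp
    also have "\<dots> = (p / (1 - p)) ^ card (G - ?T0) / Zn p m"
      using weight_calc[OF p kle] unfolding tw by (simp add: field_simps)
    finally show ?thesis using S2 kc True by simp
  qed
qed


theorem corollary4:
  fixes p :: real and m k :: nat
  assumes "0 < p" and "p < 1" and "1 \<le> m"
    and "measure_pmf.prob (graph_pmf p m) {G. surplus m G = int k} > 0"
  shows "cond_pmf (graph_pmf p m) {G. surplus m G = int k} =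
         pmf_of_set {G. connected_graph m G \<and> card G = m + k - 1}"
proof -
  have p: "0 < p" "p < 1" and m1: "1 \<le> m" using assms by auto
  let ?M = "graph_pmf p m"
  let ?A = "{G. surplus m G = int k}"
  let ?C = "{G. connected_graph m G \<and> card G = m + k - 1}"
  define c where "c = (p / (1 - p)) ^ k / Zn p m"
  have cpos: "0 < c" unfolding c_def using p Zn_pos[OF p m1] by simp
  have AC: "G \<in> ?A \<longleftrightarrow> card G = m + k - 1" for G
    using m1 unfolding surplus_def by auto
  have pmC: "pmf ?M G = c" if "G \<in> ?C" for G
  proof -
    have "card G - (m - 1) = k" using that m1 by simp
    thus ?thesis using pmf_graph[OF p m1, of G] that unfolding c_def by simp
  qed
  have pmA: "pmf ?M G = 0" if "G \<in> ?A" "G \<notin> ?C" for G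
    using pmf_graph[OF p m1, of G] that AC[of G] by auto
  have finC: "finite ?C" using graphs_fin[of m "\<lambda>G. (\<forall>u\<in>{1..m}. \<forall>v\<in>{1..m}. (adj G)\<^sup>*\<^sup>* u v) \<and> card G = m + k - 1"]
    unfolding connected_graph_def by (simp add: conj_ac)
  have CA: "?C \<subseteq> ?A" using AC by auto
  have int: "?A \<inter> set_pmf ?M = ?C"
  proof (intro equalityI subsetI)
    fix G assume "G \<in> ?A \<inter> set_pmf ?M"
    hence "pmf ?M G \<noteq> 0" "G \<in> ?A" by (auto simp: set_pmf_iff)
    thus "G \<in> ?C" using pmA[of G] by blast
  next
    fix G assume G: "G \<in> ?C"
    hence "pmf ?M G = c" by (rule pmC)
    thus "G \<in> ?A \<inter> set_pmf ?M" using cpos CA G by (auto simp: set_pmf_iff)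
  qed
  have meas: "measure ?M ?A = real (card ?C) * c"
  proof -
    have "measure ?M ?A = measure ?M ?C" using measure_Int_set_pmf[of ?M ?A] int by simp
    also have "\<dots> = (\<Sum>G\<in>?C. pmf ?M G)" by (rule measure_measure_pmf_finite[OF finC])
    also have "\<dots> = (\<Sum>G\<in>?C. c)" using pmC by (intro sum.cong) auto
    finally show ?thesis by simp
  qed
  have Cne: "?C \<noteq> {}"
  proof
    assume e: "?C = {}"
    have "card ?C = 0" unfolding e by (rule card.empty)
    hence "measure ?M ?A = 0" unfolding meas by simp
    thus False using assms(4) by simp
  qed
  have ne: "set_pmf ?M \<inter> ?A \<noteq> {}" using int Cne by auto
  show ?thesis
  proof (rule pmf_eqI)
    fix G
    have "pmf (cond_pmf ?M ?A) G = (if G \<in> ?A then pmf ?M G / measure ?M ?A else 0)"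
      by (rule pmf_cond[OF ne])
    also have "\<dots> = indicator ?C G / real (card ?C)"
      using pmC[of G] pmA[of G] meas cpos CA by (auto simp: indicator_def)
    also have "\<dots> = pmf (pmf_of_set ?C) G" using pmf_of_set[OF Cne finC] by simp
    finally show "pmf (cond_pmf ?M ?A) G = pmf (pmf_of_set ?C) G" .
  qed
qed

end
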